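(* Let $T_0 \in \mathcal{G}(X)$ be antiperiodic. Then the complement $\mathcal{G}_{T_0}\setminus\mathcal{S}_{T_0}$ is dense in $\mathcal{G}_{T_0}$.
   Context: Let $(X,m)$ and $(Y,\nu)$ both be the unit interval with Lebesgue measure, and $(Z,\mu) = (X\times Y, m\times\nu)$. $\mathcal{G}(W)$ denotes the set of invertible measure-preserving transformations of a space $W$, with the weak topology ($T_n \to T$ iff $\mu(T_nE \triangle TE) \to 0$ for every measurable $E$). $T_0$ is antiperiodic if its set of periodic points has measure zero. $\mathcal{G}_{T_0} \subset \mathcal{G}(Z)$ is the set of transformations of the form $T(x,y) = (T_0x, T_x y)$ with $T_x \in \mathcal{G}(Y)$ (extensions of $T_0$), with the relative weak topology; $T_0$ is identified with $T_0\times\mathrm{id}_Y$. $\mathbb{E}(\cdot|X)$ is conditional expectation onto the $\sigma$-algebra of sets $B\times Y$. $L^2(Z|X)$ is the space of $f\in L^2(Z)$ with $\mathbb{E}(|f|^2|X)^{1/2} \in L^\infty(X)$. $T\in\mathcal{G}_{T_0}$ is a strongly mixing extension of $T_0$ if for all $f,g\in L^2(Z|X)$, $\lim_{n\to\infty}\|\mathbb{E}(T^n f\cdot\overline{g}|X) - T_0^n\mathbb{E}(f|X)\mathbb{E}(\overline{g}|X)\|_{L^2(X)} = 0$, where $T^nf = f\circ T^n$; $\mathcal{S}_{T_0}$ is the set of such extensions. *)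

theory Defs
  imports "HOL-Probability.Probability"
begin

text \<open>X = Y = unit interval with (Borel) Lebesgue measure; Z = X x Y with product measure.\<close>

definition IX :: "real measure" where
  "IX = restrict_space lborel {0..1}"

definition IZ :: "(real \<times> real) measure" where
  "IZ = IX \<Otimes>\<^sub>M IX"

definition meas_pres :: "'a measure \<Rightarrow> ('a \<Rightarrow> 'a) \<Rightarrow> bool" where
  "meas_pres W T \<longleftrightarrow> T \<in> measurable W W \<and> distr W W T = W"

definition invertible_mpt :: "'a measure \<Rightarrow> ('a \<Rightarrow> 'a) set" where
  "invertible_mpt W = {T. bij_betw T (space W) (space W) \<and> meas_pres W T
      \<and> meas_pres W (the_inv_into (space W) T)}"

definition weak_nbhd :: "'a measure \<Rightarrow> ('a \<Rightarrow> 'a) \<Rightarrow> 'a set set \<Rightarrow> real \<Rightarrow> ('a \<Rightarrow> 'a) set" where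
  "weak_nbhd W T F e = {S \<in> invertible_mpt W. \<forall>E\<in>F. measure W ((S ` E - T ` E) \<union> (T ` E - S ` E)) < e}"

definition weak_open :: "'a measure \<Rightarrow> ('a \<Rightarrow> 'a) set \<Rightarrow> bool" where
  "weak_open W U \<longleftrightarrow> U \<subseteq> invertible_mpt W \<and>
     (\<forall>T\<in>U. \<exists>F e. finite F \<and> F \<subseteq> sets W \<and> e > 0 \<and> weak_nbhd W T F e \<subseteq> U)"

lemma istopology_weak_open: "istopology (weak_open W)"
  unfolding istopology_def
proof safe
  fix U V assume U: "weak_open W U" and V: "weak_open W V"
  show "weak_open W (U \<inter> V)"
    unfolding weak_open_def
  proof safe
    fix T assume "T \<in> U" "T \<in> V"
    then obtain F1 e1 F2 e2 where 1: "finite F1" "F1 \<subseteq> sets W" "e1 > 0" "weak_nbhd W T F1 e1 \<subseteq> U"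
      and 2: "finite F2" "F2 \<subseteq> sets W" "e2 > 0" "weak_nbhd W T F2 e2 \<subseteq> V"
      using U V unfolding weak_open_def by meson
    have "weak_nbhd W T (F1 \<union> F2) (min e1 e2) \<subseteq> weak_nbhd W T F1 e1"
         "weak_nbhd W T (F1 \<union> F2) (min e1 e2) \<subseteq> weak_nbhd W T F2 e2"
      unfolding weak_nbhd_def by fastforce+
    then show "\<exists>F e. finite F \<and> F \<subseteq> sets W \<and> e > 0 \<and> weak_nbhd W T F e \<subseteq> U \<inter> V"
      using 1 2 by (intro exI[of _ "F1 \<union> F2"] exI[of _ "min e1 e2"]) auto
  qed (use U in \<open>auto simp: weak_open_def\<close>)
next
  fix K assume K: "\<forall>U\<in>K. weak_open W U"
  show "weak_open W (\<Union>K)"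
    unfolding weak_open_def
  proof safe
    fix T U assume "T \<in> U" "U \<in> K"
    with K obtain F e where "finite F" "F \<subseteq> sets W" "e > 0" "weak_nbhd W T F e \<subseteq> U"
      unfolding weak_open_def by meson
    with \<open>U \<in> K\<close> show "\<exists>F e. finite F \<and> F \<subseteq> sets W \<and> e > 0 \<and> weak_nbhd W T F e \<subseteq> \<Union>K"
      by blast
  qed (use K in \<open>auto simp: weak_open_def\<close>)
qed

definition weak_topology :: "'a measure \<Rightarrow> ('a \<Rightarrow> 'a) topology" where
  "weak_topology W = topology (weak_open W)"

definition antiperiodic :: "'a measure \<Rightarrow> ('a \<Rightarrow> 'a) \<Rightarrow> bool" where
  "antiperiodic W T0 \<longleftrightarrow> {x \<in> space W. \<exists>n>0. (T0 ^^ n) x = x} \<in> null_sets W"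

definition extensions :: "(real \<Rightarrow> real) \<Rightarrow> (real \<times> real \<Rightarrow> real \<times> real) set" where
  "extensions T0 = {T \<in> invertible_mpt IZ. \<exists>Tx :: real \<Rightarrow> real \<Rightarrow> real.
      (\<forall>x\<in>space IX. Tx x \<in> invertible_mpt IX) \<and>
      (\<forall>x\<in>space IX. \<forall>y\<in>space IX. T (x, y) = (T0 x, Tx x y))}"

text \<open>\<open>T0\<close> identified with \<open>T0 \<times> id\<close>.\<close>

definition lift :: "(real \<Rightarrow> real) \<Rightarrow> (real \<times> real \<Rightarrow> real \<times> real)" where
  "lift T0 = (\<lambda>(x, y). (T0 x, y))"

definition subX :: "(real \<times> real) measure" where
  "subX = vimage_algebra (space IZ) fst IX"

definition cexpX :: "(real \<times> real \<Rightarrow> complex) \<Rightarrow> (real \<times> real \<Rightarrow> complex)" where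
  "cexpX f = (\<lambda>z. complex_of_real (real_cond_exp IZ subX (\<lambda>w. Re (f w)) z)
                 + \<i> * complex_of_real (real_cond_exp IZ subX (\<lambda>w. Im (f w)) z))"

definition L2_rel :: "(real \<times> real \<Rightarrow> complex) \<Rightarrow> bool" where
  "L2_rel f \<longleftrightarrow> f \<in> borel_measurable IZ \<and> integrable IZ (\<lambda>z. (cmod (f z))\<^sup>2) \<and>
     (\<exists>C. AE z in IZ. sqrt (real_cond_exp IZ subX (\<lambda>w. (cmod (f w))\<^sup>2) z) \<le> C)"

text \<open>L2 norm; for functions measurable w.r.t. the X-cylinder algebra this is the L2(X) norm.\<close>

definition L2norm :: "(real \<times> real \<Rightarrow> complex) \<Rightarrow> real" where
  "L2norm h = sqrt (\<integral>z. (cmod (h z))\<^sup>2 \<partial>IZ)"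

definition strongly_mixing_ext :: "(real \<Rightarrow> real) \<Rightarrow> (real \<times> real \<Rightarrow> real \<times> real) \<Rightarrow> bool" where
  "strongly_mixing_ext T0 T \<longleftrightarrow>
     (\<forall>f g. L2_rel f \<and> L2_rel g \<longrightarrow>
        (\<lambda>n. L2norm (\<lambda>z. cexpX (\<lambda>w. f ((T ^^ n) w) * cnj (g w)) z
                        - cexpX f (((lift T0) ^^ n) z) * cexpX (\<lambda>w. cnj (g w)) z))
        \<longlonglongrightarrow> 0)"

definition strongly_mixing_exts :: "(real \<Rightarrow> real) \<Rightarrow> (real \<times> real \<Rightarrow> real \<times> real) set" where
  "strongly_mixing_exts T0 = {T \<in> extensions T0. strongly_mixing_ext T0 T}"

end

theory Submission
  imports Defs
begin



lemma space_IX: "space IX = {0..1}"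
  by (simp add: IX_def)
lemma prob_IX: "prob_space IX"
  unfolding IX_def by (rule prob_space_restrict_space) auto
lemma space_IZ: "space IZ = {0..1} \<times> {0..1}"
  by (simp add: IZ_def space_pair_measure space_IX)
lemma prob_IZ: "prob_space IZ"
  unfolding IZ_def using prob_IX by (simp add: prob_space_pair prob_space.axioms)

section \<open>Measure preserving maps\<close>

lemma meas_pres_emeasure:
  assumes "meas_pres W T" "A \<in> sets W"
  shows "emeasure W (T -` A \<inter> space W) = emeasure W A"
proof -
  have "emeasure W A = emeasure (distr W W T) A" using assms by (simp add: meas_pres_def)
  also have "\<dots> = emeasure W (T -` A \<inter> space W)"
    using assms by (intro emeasure_distr) (auto simp: meas_pres_def)
  finally show ?thesis by simp
qed

lemma meas_presI:
  assumes "T \<in> measurable W W" "\<And>A. A \<in> sets W \<Longrightarrow> emeasure W (T -` A \<inter> space W) = emeasure W A"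
  shows "meas_pres W T"
  unfolding meas_pres_def
proof
  show "distr W W T = W"
    by (rule measure_eqI) (auto simp: emeasure_distr assms)
qed (rule assms)

lemma meas_pres_cong:
  assumes "\<And>x. x \<in> space W \<Longrightarrow> T x = T' x" "meas_pres W T"
  shows "meas_pres W T'"
proof (rule meas_presI)
  show "T' \<in> measurable W W"
    using assms measurable_cong[of W T T'] by (auto simp: meas_pres_def)
  fix A assume "A \<in> sets W"
  moreover have "T' -` A \<inter> space W = T -` A \<inter> space W" using assms by auto
  ultimately show "emeasure W (T' -` A \<inter> space W) = emeasure W A"
    using meas_pres_emeasure[OF assms(2)] by simp
qed

section \<open>Invertible mpts\<close>

lemma imptD:
  assumes "T \<in> invertible_mpt W"
  shows "bij_betw T (space W) (space W)" "meas_pres W T" "meas_pres W (the_inv_into (space W) T)"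
    "T \<in> measurable W W" "the_inv_into (space W) T \<in> measurable W W"
  using assms by (auto simp: invertible_mpt_def meas_pres_def)

lemma impt_space: "T \<in> invertible_mpt W \<Longrightarrow> x \<in> space W \<Longrightarrow> T x \<in> space W"
  using imptD(1) bij_betwE by blast

lemma impt_inv_space: "T \<in> invertible_mpt W \<Longrightarrow> x \<in> space W \<Longrightarrow> the_inv_into (space W) T x \<in> space W"
  using imptD(1) by (metis bij_betw_def the_inv_into_into order_refl)

lemma impt_inv_f: "T \<in> invertible_mpt W \<Longrightarrow> x \<in> space W \<Longrightarrow> T (the_inv_into (space W) T x) = x"
  using imptD(1) by (metis bij_betw_def f_the_inv_into_f)

lemma impt_f_inv: "T \<in> invertible_mpt W \<Longrightarrow> x \<in> space W \<Longrightarrow> the_inv_into (space W) T (T x) = x"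
  using imptD(1) by (metis bij_betw_def the_inv_into_f_f)

lemma impt_inj: "T \<in> invertible_mpt W \<Longrightarrow> inj_on T (space W)"
  using imptD(1) bij_betw_def by blast

lemma imptI:
  assumes bij: "bij_betw T (space W) (space W)" and mp: "meas_pres W T"
    and im: "the_inv_into (space W) T \<in> measurable W W"
  shows "T \<in> invertible_mpt W"
proof -
  let ?I = "the_inv_into (space W) T"
  have inj: "inj_on T (space W)" and sur: "T ` space W = space W" using bij by (auto simp: bij_betw_def)
  have "meas_pres W ?I"
  proof (rule meas_presI[OF im])
    fix A assume A: "A \<in> sets W"
    have A': "A \<subseteq> space W" using sets.sets_into_space[OF A] .
    have eq1: "?I -` A \<inter> space W = T ` A"
    proof
      show "?I -` A \<inter> space W \<subseteq> T ` A"
      proof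
        fix x assume "x \<in> ?I -` A \<inter> space W"
        then have "?I x \<in> A" "x \<in> space W" by auto
        then show "x \<in> T ` A" using f_the_inv_into_f[OF inj] sur by (metis image_eqI)
      qed
      show "T ` A \<subseteq> ?I -` A \<inter> space W"
        using A' the_inv_into_f_f[OF inj] sur by auto
    qed
    have eq2: "T -` (T ` A) \<inter> space W = A"
      using A' inj by (auto simp: inj_on_def)
    have TA: "T ` A \<in> sets W" using eq1 measurable_sets[OF im A] by simp
    have "emeasure W (T ` A) = emeasure W (T -` (T ` A) \<inter> space W)"
      using meas_pres_emeasure[OF mp TA] by simp
    then show "emeasure W (?I -` A \<inter> space W) = emeasure W A" using eq1 eq2 by simp
  qed
  then show ?thesis using assms by (auto simp: invertible_mpt_def)
qed

lemma impt_image: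
  assumes "T \<in> invertible_mpt W" "A \<in> sets W"
  shows "T ` A \<in> sets W" "emeasure W (T ` A) = emeasure W A"
proof -
  let ?I = "the_inv_into (space W) T"
  have A': "A \<subseteq> space W" using sets.sets_into_space[OF assms(2)] .
  have eq1: "?I -` A \<inter> space W = T ` A"
  proof
    show "?I -` A \<inter> space W \<subseteq> T ` A"
    proof
      fix x assume "x \<in> ?I -` A \<inter> space W"
      then have "?I x \<in> A" "x \<in> space W" by auto
      then show "x \<in> T ` A" using impt_inv_f[OF assms(1)] by (metis image_eqI)
    qed
    show "T ` A \<subseteq> ?I -` A \<inter> space W"
      using A' impt_f_inv[OF assms(1)] impt_space[OF assms(1)] by auto
  qed
  show "T ` A \<in> sets W" using eq1 measurable_sets[OF imptD(5)[OF assms(1)] assms(2)] by simp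
  show "emeasure W (T ` A) = emeasure W A"
    using eq1 meas_pres_emeasure[OF imptD(3)[OF assms(1)] assms(2)] by simp
qed

lemma impt_id: "(\<lambda>x. x) \<in> invertible_mpt W"
proof (rule imptI)
  show "bij_betw (\<lambda>x. x) (space W) (space W)" by (simp add: bij_betw_def)
  show "meas_pres W (\<lambda>x. x)" by (rule meas_presI) auto
  have "\<And>x. x \<in> space W \<Longrightarrow> the_inv_into (space W) (\<lambda>x. x) x = x"
    by (simp add: the_inv_into_f_eq)
  then show "the_inv_into (space W) (\<lambda>x. x) \<in> measurable W W"
    using measurable_cong[of W "the_inv_into (space W) (\<lambda>x. x)" "\<lambda>x. x"] by simp
qed

lemma impt_id': "id \<in> invertible_mpt W"
  using impt_id by (simp add: id_def)

lemma impt_comp: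
  assumes T: "T \<in> invertible_mpt W" and S: "S \<in> invertible_mpt W"
  shows "(\<lambda>x. T (S x)) \<in> invertible_mpt W"
proof (rule imptI)
  show bij: "bij_betw (\<lambda>x. T (S x)) (space W) (space W)"
    using bij_betw_trans[OF imptD(1)[OF S] imptD(1)[OF T]] by (simp add: comp_def)
  show "meas_pres W (\<lambda>x. T (S x))"
  proof (rule meas_presI)
    show "(\<lambda>x. T (S x)) \<in> measurable W W"
      using imptD(4)[OF T] imptD(4)[OF S] by (rule measurable_compose[rotated])
    fix A assume A: "A \<in> sets W"
    have eq: "(\<lambda>x. T (S x)) -` A \<inter> space W = S -` (T -` A \<inter> space W) \<inter> space W"
      using impt_space[OF S] by auto
    have m: "T -` A \<inter> space W \<in> sets W" using measurable_sets[OF imptD(4)[OF T] A] .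
    have "emeasure W ((\<lambda>x. T (S x)) -` A \<inter> space W) = emeasure W (S -` (T -` A \<inter> space W) \<inter> space W)"
      by (simp only: eq)
    also have "\<dots> = emeasure W (T -` A \<inter> space W)" using meas_pres_emeasure[OF imptD(2)[OF S] m] .
    also have "\<dots> = emeasure W A" using meas_pres_emeasure[OF imptD(2)[OF T] A] .
    finally show "emeasure W ((\<lambda>x. T (S x)) -` A \<inter> space W) = emeasure W A" .
  qed
  have "\<And>x. x \<in> space W \<Longrightarrow> the_inv_into (space W) (\<lambda>x. T (S x)) x
        = the_inv_into (space W) S (the_inv_into (space W) T x)"
  proof -
    fix x assume x: "x \<in> space W"
    show "the_inv_into (space W) (\<lambda>x. T (S x)) x = the_inv_into (space W) S (the_inv_into (space W) T x)"
      apply (rule the_inv_into_f_eq)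
      using bij x impt_inv_f[OF T] impt_inv_f[OF S] impt_inv_space[OF T] impt_inv_space[OF S]
      by (auto simp: bij_betw_def)
  qed
  moreover have "(\<lambda>x. the_inv_into (space W) S (the_inv_into (space W) T x)) \<in> measurable W W"
    using imptD(5)[OF T] imptD(5)[OF S] by (rule measurable_compose)
  ultimately show "the_inv_into (space W) (\<lambda>x. T (S x)) \<in> measurable W W"
    using measurable_cong by (metis (no_types, lifting))
qed

lemma impt_inv:
  assumes T: "T \<in> invertible_mpt W"
  shows "the_inv_into (space W) T \<in> invertible_mpt W"
proof (rule imptI)
  show "bij_betw (the_inv_into (space W) T) (space W) (space W)"
    using bij_betw_the_inv_into[OF imptD(1)[OF T]] .
  show "meas_pres W (the_inv_into (space W) T)" using imptD(3)[OF T] .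
  have "\<And>x. x \<in> space W \<Longrightarrow> the_inv_into (space W) (the_inv_into (space W) T) x = T x"
    apply (rule the_inv_into_f_eq)
    using bij_betw_the_inv_into[OF imptD(1)[OF T]] impt_f_inv[OF T] impt_space[OF T]
    by (auto simp: bij_betw_def)
  then show "the_inv_into (space W) (the_inv_into (space W) T) \<in> measurable W W"
    using measurable_cong imptD(4)[OF T] by (metis (no_types, lifting))
qed

lemma impt_pow:
  assumes T: "T \<in> invertible_mpt W"
  shows "T ^^ n \<in> invertible_mpt W"
proof (induction n)
  case 0 then show ?case using impt_id by (simp add: id_def)
next
  case (Suc n)
  then show ?case using impt_comp[OF T Suc] by (simp add: comp_def)
qed

lemma impt_cong:
  assumes T: "T \<in> invertible_mpt W" and eq: "\<And>x. x \<in> space W \<Longrightarrow> T x = T' x"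
  shows "T' \<in> invertible_mpt W"
proof (rule imptI)
  show bij: "bij_betw T' (space W) (space W)" using imptD(1)[OF T] eq bij_betw_cong by blast
  show "meas_pres W T'" using meas_pres_cong[OF eq imptD(2)[OF T]] .
  have "\<And>x. x \<in> space W \<Longrightarrow> the_inv_into (space W) T' x = the_inv_into (space W) T x"
    apply (rule the_inv_into_f_eq)
    using bij impt_inv_f[OF T] impt_inv_space[OF T] eq
    by (auto simp: bij_betw_def)
  then show "the_inv_into (space W) T' \<in> measurable W W"
    using measurable_cong imptD(5)[OF T] by (metis (no_types, lifting))
qed




definition fib :: "(real \<Rightarrow> real) \<Rightarrow> (real \<times> real \<Rightarrow> real \<times> real) \<Rightarrow> (real \<Rightarrow> real \<Rightarrow> real) \<Rightarrow> bool" where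
  "fib R G g \<longleftrightarrow> (\<forall>x\<in>space IX. g x \<in> invertible_mpt IX) \<and>
     (\<forall>x\<in>space IX. \<forall>y\<in>space IX. G (x, y) = (R x, g x y))"

lemma extensions_fib: "extensions T0 = {T \<in> invertible_mpt IZ. \<exists>g. fib T0 T g}"
  unfolding extensions_def fib_def by auto

lemma fibD: "fib R G g \<Longrightarrow> x \<in> space IX \<Longrightarrow> y \<in> space IX \<Longrightarrow> G (x, y) = (R x, g x y)"
  "fib R G g \<Longrightarrow> x \<in> space IX \<Longrightarrow> g x \<in> invertible_mpt IX"
  by (auto simp: fib_def)

lemma fib_comp:
  assumes "fib R G g" "fib Q H h" "\<And>x. x \<in> space IX \<Longrightarrow> Q x \<in> space IX"
  shows "fib (\<lambda>x. R (Q x)) (\<lambda>z. G (H z)) (\<lambda>x y. g (Q x) (h x y))"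
  unfolding fib_def
proof safe
  fix x assume x: "x \<in> space IX"
  show "(\<lambda>y. g (Q x) (h x y)) \<in> invertible_mpt IX"
    using impt_comp[OF fibD(2)[OF assms(1) assms(3)[OF x]] fibD(2)[OF assms(2) x]] .
  fix y assume y: "y \<in> space IX"
  have "h x y \<in> space IX" using impt_space[OF fibD(2)[OF assms(2) x] y] .
  then show "G (H (x, y)) = (R (Q x), g (Q x) (h x y))"
    using fibD(1)[OF assms(2) x y] fibD(1)[OF assms(1) assms(3)[OF x]] by simp
qed

lemma fib_id: "fib (\<lambda>x. x) (\<lambda>z. z) (\<lambda>x y. y)"
  unfolding fib_def using impt_id by auto

primrec coc :: "(real \<Rightarrow> real \<Rightarrow> real) \<Rightarrow> (real \<Rightarrow> real) \<Rightarrow> nat \<Rightarrow> real \<Rightarrow> real \<Rightarrow> real" where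
  "coc g R 0 x = (\<lambda>y. y)"
| "coc g R (Suc n) x = (\<lambda>y. g ((R ^^ n) x) (coc g R n x y))"

lemma funpow_space: "(\<And>x. x \<in> S \<Longrightarrow> R x \<in> S) \<Longrightarrow> x \<in> S \<Longrightarrow> (R ^^ n) x \<in> S"
  by (induction n) auto

lemma fib_pow:
  assumes "fib R G g" "\<And>x. x \<in> space IX \<Longrightarrow> R x \<in> space IX"
  shows "fib (R ^^ n) (G ^^ n) (coc g R n)"
proof (induction n)
  case 0
  then show ?case using fib_id by (simp add: id_def)
next
  case (Suc n)
  have "fib (\<lambda>x. R ((R ^^ n) x)) (\<lambda>z. G ((G ^^ n) z)) (\<lambda>x y. g ((R ^^ n) x) (coc g R n x y))"
    by (rule fib_comp[OF assms(1) Suc]) (rule funpow_space[OF assms(2)])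
  then show ?case by (simp add: comp_def)
qed

lemma fib_cong:
  assumes "fib R G g" "\<And>z. z \<in> space IZ \<Longrightarrow> G z = G' z" "\<And>x. x \<in> space IX \<Longrightarrow> R x = R' x"
  shows "fib R' G' g"
  using assms unfolding fib_def space_IZ space_IX by auto

lemma fib_glue:
  assumes "\<And>i. fib R (G i) (g i)" "\<And>z. z \<in> space IZ \<Longrightarrow> \<iota> z = \<iota>' (fst z)"
  shows "fib R (\<lambda>z. G (\<iota> z) z) (\<lambda>x. g (\<iota>' x) x)"
  using assms unfolding fib_def space_IZ space_IX by auto

lemma fib_inv:
  assumes G: "G \<in> invertible_mpt IZ" and f: "fib R G g" and R: "bij_betw R (space IX) (space IX)"
  shows "fib (the_inv_into (space IX) R) (the_inv_into (space IZ) G)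
           (\<lambda>x. the_inv_into (space IX) (g (the_inv_into (space IX) R x)))"
  unfolding fib_def
proof safe
  fix x assume x: "x \<in> space IX"
  let ?x' = "the_inv_into (space IX) R x"
  have x': "?x' \<in> space IX" "R ?x' = x"
    using R x by (auto simp: bij_betw_def the_inv_into_into f_the_inv_into_f)
  show "the_inv_into (space IX) (g ?x') \<in> invertible_mpt IX"
    using impt_inv[OF fibD(2)[OF f x'(1)]] .
  fix y assume y: "y \<in> space IX"
  let ?y' = "the_inv_into (space IX) (g ?x') y"
  have y': "?y' \<in> space IX" "g ?x' ?y' = y"
    using impt_inv_space[OF fibD(2)[OF f x'(1)] y] impt_inv_f[OF fibD(2)[OF f x'(1)] y] by auto
  have "G (?x', ?y') = (x, y)" using fibD(1)[OF f x'(1) y'(1)] x'(2) y'(2) by simp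
  moreover have "(?x', ?y') \<in> space IZ" using x' y' by (simp add: space_IZ space_IX)
  ultimately show "the_inv_into (space IZ) G (x, y) = (?x', ?y')"
    using impt_inj[OF G] by (intro the_inv_into_f_eq)
qed

lemma lift_simp[simp]: "lift T0 (x, y) = (T0 x, y)"
  by (simp add: lift_def)

lemma fib_lift: "fib T0 (lift T0) (\<lambda>x y. y)"
  unfolding fib_def using impt_id by auto

lemma sigma_finite_IX: "sigma_finite_measure IX"
  using prob_IX by (simp add: prob_space_imp_sigma_finite)

lemma lift_impt:
  assumes T0: "T0 \<in> invertible_mpt IX"
  shows "lift T0 \<in> invertible_mpt IZ"
proof (rule imptI)
  have bT: "bij_betw T0 (space IX) (space IX)" using imptD(1)[OF T0] .
  show "bij_betw (lift T0) (space IZ) (space IZ)"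
    unfolding space_IZ bij_betw_def
  proof
    show "inj_on (lift T0) ({0..1} \<times> {0..1})"
      using bT unfolding inj_on_def bij_betw_def space_IX by (auto simp: lift_def)
    show "lift T0 ` ({0..1} \<times> {0..1}) = {0..1} \<times> {0..1}"
    proof
      show "lift T0 ` ({0..1} \<times> {0..1}) \<subseteq> {0..1} \<times> {0..1}"
        using bT unfolding bij_betw_def space_IX by (auto simp: lift_def)
      show "{0..1} \<times> {0..1} \<subseteq> lift T0 ` ({0..1} \<times> {0..1})"
      proof
        fix z assume z: "z \<in> ({0..1::real} \<times> {0..1::real})"
        then obtain a b where ab: "z = (a, b)" "a \<in> {0..1}" "b \<in> {0..1}" by auto
        have "a \<in> T0 ` {0..1}" using bT ab unfolding bij_betw_def space_IX by simp
        then obtain a' where a': "a' \<in> {0..1}" "T0 a' = a" by blast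
        have "z = lift T0 (a', b)" using ab a' by simp
        then show "z \<in> lift T0 ` ({0..1} \<times> {0..1})" using a' ab by blast
      qed
    qed
  qed
  have mT[measurable]: "T0 \<in> measurable IX IX" using imptD(4)[OF T0] .
  have lf: "lift T0 = (\<lambda>(x, y). (T0 x, (\<lambda>y. y) y))" by (simp add: lift_def)
  have "distr IX IX T0 \<Otimes>\<^sub>M distr IX IX (\<lambda>y. y) = distr (IX \<Otimes>\<^sub>M IX) (IX \<Otimes>\<^sub>M IX) (\<lambda>(x,y). (T0 x, (\<lambda>y. y) y))"
    by (rule pair_measure_distr[OF mT measurable_ident_sets[OF refl]]) (simp add: distr_id sigma_finite_IX)
  then have "distr IZ IZ (lift T0) = distr IX IX T0 \<Otimes>\<^sub>M distr IX IX (\<lambda>y. y)"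
    unfolding IZ_def lf by simp
  also have "\<dots> = IZ" using imptD(2)[OF T0] by (simp add: meas_pres_def distr_id IZ_def)
  finally have "distr IZ IZ (lift T0) = IZ" .
  moreover have "lift T0 \<in> measurable IZ IZ" unfolding IZ_def lift_def by measurable
  ultimately show "meas_pres IZ (lift T0)" by (simp add: meas_pres_def)
  let ?U = "the_inv_into (space IX) T0"
  have mU[measurable]: "?U \<in> measurable IX IX" using imptD(5)[OF T0] .
  have inj: "inj_on (lift T0) (space IZ)"
    using bT unfolding inj_on_def bij_betw_def space_IX space_IZ by (auto simp: lift_def)
  have "the_inv_into (space IZ) (lift T0) z = lift ?U z" if z: "z \<in> space IZ" for z
  proof (rule the_inv_into_f_eq[OF inj])
    obtain a b where ab: "z = (a, b)" "a \<in> space IX" "b \<in> space IX" using z by (auto simp: space_IZ space_IX)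
    show "lift T0 (lift ?U z) = z" using ab impt_inv_f[OF T0] by simp
    show "lift ?U z \<in> space IZ" using ab impt_inv_space[OF T0] by (simp add: space_IZ space_IX)
  qed
  moreover have "lift ?U \<in> measurable IZ IZ" unfolding IZ_def lift_def by measurable
  ultimately show "the_inv_into (space IZ) (lift T0) \<in> measurable IZ IZ"
    using measurable_cong by (metis (no_types, lifting))
qed




lemma glue_impt:
  fixes \<iota> :: "'a \<Rightarrow> nat"
  assumes G: "\<And>i. G i \<in> invertible_mpt W" and \<iota>: "\<iota> \<in> measurable W (count_space UNIV)"
    and pres: "\<And>i z. z \<in> space W \<Longrightarrow> \<iota> (G i z) = i \<longleftrightarrow> \<iota> z = i"
  shows "(\<lambda>z. G (\<iota> z) z) \<in> invertible_mpt W"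
    and "\<And>w. w \<in> space W \<Longrightarrow> the_inv_into (space W) (\<lambda>z. G (\<iota> z) z) w = the_inv_into (space W) (G (\<iota> w)) w"
proof -
  let ?P = "\<lambda>z. G (\<iota> z) z"
  have same: "\<iota> (?P z) = \<iota> z" if "z \<in> space W" for z using pres[OF that, of "\<iota> z"] by simp
  have inj: "inj_on ?P (space W)"
  proof (rule inj_onI)
    fix z w assume zw: "z \<in> space W" "w \<in> space W" "?P z = ?P w"
    then have "\<iota> z = \<iota> w" using same by metis
    then show "z = w" using zw impt_inj[OF G, of "\<iota> z"] by (auto dest: inj_onD)
  qed
  have pre: "the_inv_into (space W) (G (\<iota> w)) w \<in> space W \<and> ?P (the_inv_into (space W) (G (\<iota> w)) w) = w"
    if w: "w \<in> space W" for w
  proof -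
    let ?i = "\<iota> w"
    let ?z = "the_inv_into (space W) (G ?i) w"
    have z: "?z \<in> space W" "G ?i ?z = w" using impt_inv_space[OF G w] impt_inv_f[OF G w] by auto
    then have "\<iota> ?z = ?i" using pres[OF z(1), of ?i] by simp
    then show ?thesis using z by simp
  qed
  have bij: "bij_betw ?P (space W) (space W)"
    unfolding bij_betw_def
  proof
    show "inj_on ?P (space W)" by (rule inj)
    show "?P ` space W = space W"
    proof
      show "?P ` space W \<subseteq> space W"
      proof (rule image_subsetI)
        fix z assume "z \<in> space W" then show "?P z \<in> space W" by (rule impt_space[OF G])
      qed
      show "space W \<subseteq> ?P ` space W"
      proof
        fix w assume w: "w \<in> space W"
        show "w \<in> ?P ` space W"
          using pre[OF w] by (intro rev_image_eqI[where x="the_inv_into (space W) (G (\<iota> w)) w"]) auto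
      qed
    qed
  qed
  have inveq: "the_inv_into (space W) ?P w = the_inv_into (space W) (G (\<iota> w)) w" if w: "w \<in> space W" for w
    by (rule the_inv_into_f_eq[OF inj]) (use pre[OF w] in auto)
  then show "\<And>w. w \<in> space W \<Longrightarrow> the_inv_into (space W) ?P w = the_inv_into (space W) (G (\<iota> w)) w" .
  show "?P \<in> invertible_mpt W"
  proof (rule imptI[OF bij])
    have mP: "?P \<in> measurable W W"
      by (rule measurable_compose_countable'[OF imptD(4)[OF G] \<iota>]) auto
    show "meas_pres W ?P"
    proof (rule meas_presI[OF mP])
      fix A assume A: "A \<in> sets W"
      define Pi where "Pi i = \<iota> -` {i} \<inter> space W" for i
      have Pi: "Pi i \<in> sets W" for i unfolding Pi_def using \<iota> by (simp add: measurable_count_space_eq2_countable)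
      define C where "C i = G i -` (A \<inter> Pi i) \<inter> space W" for i
      have C: "C i \<in> sets W" for i unfolding C_def using A Pi measurable_sets[OF imptD(4)[OF G]] by blast
      have eq1: "?P -` A \<inter> space W = (\<Union>i. C i)"
        unfolding C_def Pi_def using pres impt_space[OF G] by auto
      have disjC: "disjoint_family C"
        unfolding disjoint_family_on_def C_def Pi_def using pres by auto
      have eq2: "A = (\<Union>i. A \<inter> Pi i)" using sets.sets_into_space[OF A] unfolding Pi_def by auto
      have disjA: "disjoint_family (\<lambda>i. A \<inter> Pi i)"
        unfolding disjoint_family_on_def Pi_def by auto
      have "emeasure W (?P -` A \<inter> space W) = (\<Sum>i. emeasure W (C i))"
        unfolding eq1 by (rule suminf_emeasure[symmetric]) (use C disjC in auto)
      also have "\<dots> = (\<Sum>i. emeasure W (A \<inter> Pi i))"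
      proof (rule suminf_cong)
        fix i
        have "A \<inter> Pi i \<in> sets W" using A Pi by blast
        then show "emeasure W (C i) = emeasure W (A \<inter> Pi i)"
          unfolding C_def by (rule meas_pres_emeasure[OF imptD(2)[OF G]])
      qed
      also have "\<dots> = emeasure W (\<Union>i. A \<inter> Pi i)"
        by (rule suminf_emeasure) (use A Pi disjA in auto)
      also have "\<dots> = emeasure W A" using eq2 by simp
      finally show "emeasure W (?P -` A \<inter> space W) = emeasure W A" .
    qed
    have "(\<lambda>w. the_inv_into (space W) (G (\<iota> w)) w) \<in> measurable W W"
      by (rule measurable_compose_countable'[OF imptD(5)[OF G] \<iota>]) auto
    moreover have "the_inv_into (space W) ?P \<in> measurable W W \<longleftrightarrow>
        (\<lambda>w. the_inv_into (space W) (G (\<iota> w)) w) \<in> measurable W W"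
      by (rule measurable_cong) (rule inveq)
    ultimately show "the_inv_into (space W) ?P \<in> measurable W W" by simp
  qed
qed




lemma the_inv_into_id_on: "x \<in> S \<Longrightarrow> the_inv_into S (\<lambda>x. x) x = x"
  by (rule the_inv_into_f_eq) (auto simp: inj_on_def)

lemma lift_pow: "(lift R ^^ k) (a, b) = ((R ^^ k) a, b)"
  by (induction k) (auto simp: lift_def)

lemma funpow_Suc_apply: "(f ^^ Suc n) x = (f ^^ n) (f x)"
  by (simp add: funpow_swap1)

locale constr =
  fixes T0 :: "real \<Rightarrow> real" and T :: "real \<times> real \<Rightarrow> real \<times> real"
    and g :: "real \<Rightarrow> real \<Rightarrow> real" and B :: "real set"
  assumes T0: "T0 \<in> invertible_mpt IX" and T: "T \<in> invertible_mpt IZ" and fT: "fib T0 T g"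
    and B: "B \<in> sets IX"
begin

definition "U = the_inv_into (space IX) T0"
definition "I = {x \<in> space IX. \<forall>N. \<exists>k\<ge>N. (T0 ^^ k) x \<in> B}"
definition "kk x = (LEAST k. (T0 ^^ k) x \<in> B)"
definition "idx' x = (if x \<in> I then Suc (kk x) else 0)"
definition "Gk i = (case i of 0 \<Rightarrow> (\<lambda>z. z) | Suc k \<Rightarrow> (\<lambda>z. (lift U ^^ k) ((T ^^ k) z)))"
definition "Psi z = Gk (idx' (fst z)) z"
definition "Pinv = the_inv_into (space IZ) Psi"
definition "S z = (if fst z \<in> I then Pinv (lift T0 (Psi z)) else T z)"

lemma U: "U \<in> invertible_mpt IX" unfolding U_def by (rule impt_inv[OF T0])
lemma T0sp: "x \<in> space IX \<Longrightarrow> T0 x \<in> space IX" by (rule impt_space[OF T0])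
lemma Usp: "x \<in> space IX \<Longrightarrow> U x \<in> space IX" unfolding U_def by (rule impt_inv_space[OF T0])
lemma U_T0: "x \<in> space IX \<Longrightarrow> U (T0 x) = x" unfolding U_def by (rule impt_f_inv[OF T0])
lemma Tsp: "z \<in> space IZ \<Longrightarrow> T z \<in> space IZ" by (rule impt_space[OF T])

lemma T0_pow_meas: "(T0 ^^ k) \<in> measurable IX IX" using imptD(4)[OF impt_pow[OF T0]] .


lemma I_sets: "I \<in> sets IX"
proof -
  have [measurable]: "\<And>k. (T0 ^^ k) \<in> measurable IX IX" by (rule T0_pow_meas)
  have [measurable]: "B \<in> sets IX" by (rule B)
  show ?thesis unfolding I_def by measurable
qed

lemma I_sp: "x \<in> I \<Longrightarrow> x \<in> space IX" unfolding I_def by auto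

lemma I_inv: assumes x: "x \<in> space IX" shows "T0 x \<in> I \<longleftrightarrow> x \<in> I"
proof
  assume "T0 x \<in> I"
  then have h: "\<forall>N. \<exists>k\<ge>N. (T0 ^^ Suc k) x \<in> B" unfolding I_def by (simp add: funpow_swap1)
  have "\<exists>k\<ge>N. (T0 ^^ k) x \<in> B" for N
  proof -
    obtain k where "k \<ge> N" "(T0 ^^ Suc k) x \<in> B" using h by blast
    then show ?thesis by (intro exI[of _ "Suc k"]) auto
  qed
  then show "x \<in> I" using x unfolding I_def by auto
next
  assume "x \<in> I"
  then have h: "\<forall>N. \<exists>k\<ge>N. (T0 ^^ k) x \<in> B" unfolding I_def by auto
  have "\<exists>k\<ge>N. (T0 ^^ k) (T0 x) \<in> B" for N
  proof -
    obtain k where k: "k \<ge> Suc N" "(T0 ^^ k) x \<in> B" using h by blast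
    then obtain m where "k = Suc m" by (cases k) auto
    then show ?thesis using k by (intro exI[of _ m]) (auto simp: funpow_swap1)
  qed
  then show "T0 x \<in> I" using T0sp[OF x] unfolding I_def by auto
qed

lemma kk_B: "x \<in> I \<Longrightarrow> (T0 ^^ kk x) x \<in> B"
  unfolding kk_def I_def by (rule LeastI_ex) blast

lemma kk_min: "j < kk x \<Longrightarrow> (T0 ^^ j) x \<notin> B"
  unfolding kk_def by (rule not_less_Least)

lemma kk_iff: "x \<in> I \<Longrightarrow> kk x = k \<longleftrightarrow> (T0 ^^ k) x \<in> B \<and> (\<forall>j<k. (T0 ^^ j) x \<notin> B)"
  using kk_B kk_min by (metis linorder_neqE_nat)

lemma kk_T0:
  assumes x: "x \<in> I" and nB: "x \<notin> B"
  shows "kk x = Suc (kk (T0 x))"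
proof -
  have Tx: "T0 x \<in> I" using I_inv[OF I_sp[OF x]] x by simp
  have "kk x \<noteq> 0" using kk_B[OF x] nB by (metis funpow_0)
  then obtain m where m: "kk x = Suc m" by (cases "kk x") auto
  have "(T0 ^^ m) (T0 x) \<in> B" using kk_B[OF x] m by (simp add: funpow_swap1)
  moreover have "\<forall>j<m. (T0 ^^ j) (T0 x) \<notin> B"
  proof safe
    fix j assume "j < m" "(T0 ^^ j) (T0 x) \<in> B"
    then show False using kk_min[of "Suc j" x] m by (simp add: funpow_swap1)
  qed
  ultimately have "kk (T0 x) = m" using kk_iff[OF Tx] by simp
  then show ?thesis using m by simp
qed

lemma idx'_meas: "idx' \<in> measurable IX (count_space UNIV)"
  unfolding measurable_count_space_eq2_countable
proof safe
  fix n :: nat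
  show "idx' -` {n} \<inter> space IX \<in> sets IX"
  proof (cases n)
    case 0
    then have "idx' -` {n} \<inter> space IX = space IX - I" unfolding idx'_def by auto
    then show ?thesis using I_sets by auto
  next
    case (Suc k)
    have "idx' -` {n} \<inter> space IX = I \<inter> {x \<in> space IX. (T0 ^^ k) x \<in> B \<and> (\<forall>j<k. (T0 ^^ j) x \<notin> B)}"
    proof (rule set_eqI)
      fix x show "x \<in> idx' -` {n} \<inter> space IX \<longleftrightarrow> x \<in> I \<inter> {x \<in> space IX. (T0 ^^ k) x \<in> B \<and> (\<forall>j<k. (T0 ^^ j) x \<notin> B)}"
        unfolding idx'_def Suc by (cases "x \<in> I") (auto simp: kk_iff I_sp)
    qed
    moreover have "{x \<in> space IX. (T0 ^^ k) x \<in> B \<and> (\<forall>j<k. (T0 ^^ j) x \<notin> B)} \<in> sets IX"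
    proof -
      have [measurable]: "\<And>k. (T0 ^^ k) \<in> measurable IX IX" by (rule T0_pow_meas)
      have [measurable]: "B \<in> sets IX" by (rule B)
      show ?thesis by measurable
    qed
    ultimately show ?thesis using I_sets by auto
  qed
qed simp

lemma U_pow: "x \<in> space IX \<Longrightarrow> (U ^^ k) ((T0 ^^ k) x) = x"
proof (induction k arbitrary: x)
  case 0 then show ?case by simp
next
  case (Suc k)
  have "(U ^^ Suc k) ((T0 ^^ Suc k) x) = (U ^^ k) (U (T0 ((T0 ^^ k) x)))"
    by (simp add: funpow_swap1)
  also have "\<dots> = (U ^^ k) ((T0 ^^ k) x)" using U_T0 funpow_space[OF T0sp Suc.prems] by simp
  finally show ?case using Suc by simp
qed

lemma T_pow: "x \<in> space IX \<Longrightarrow> y \<in> space IX \<Longrightarrow> (T ^^ k) (x, y) = ((T0 ^^ k) x, coc g T0 k x y)"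
  using fib_pow[OF fT T0sp] by (rule fibD(1))

lemma Gk_eq: "z \<in> space IZ \<Longrightarrow> Gk (Suc k) z = (fst z, snd ((T ^^ k) z))"
  unfolding Gk_def space_IZ
  by (auto simp: T_pow lift_pow U_pow space_IX)

lemma Gk_fst: "z \<in> space IZ \<Longrightarrow> fst (Gk i z) = fst z"
  by (cases i) (auto simp: Gk_eq, simp add: Gk_def)

lemma Gk_impt: "Gk i \<in> invertible_mpt IZ"
proof (cases i)
  case 0 then show ?thesis using impt_id by (simp add: Gk_def)
next
  case (Suc k)
  then show ?thesis unfolding Gk_def
    using impt_comp[OF impt_pow[OF lift_impt[OF U]] impt_pow[OF T]] by simp
qed

lemma Gk_fib: "\<exists>h. fib (\<lambda>x. x) (Gk i) h"
proof (cases i)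
  case 0 then show ?thesis using fib_id by (auto simp: Gk_def)
next
  case (Suc k)
  have "fib (\<lambda>x. (U ^^ k) ((T0 ^^ k) x)) (\<lambda>z. (lift U ^^ k) ((T ^^ k) z)) (\<lambda>x y. coc (\<lambda>x y. y) U k ((T0 ^^ k) x) (coc g T0 k x y))"
    by (rule fib_comp[OF fib_pow[OF fib_lift Usp] fib_pow[OF fT T0sp]]) (auto intro: funpow_space[OF T0sp])
  then have "fib (\<lambda>x. x) (Gk i) (\<lambda>x y. coc (\<lambda>x y. y) U k ((T0 ^^ k) x) (coc g T0 k x y))"
    by (rule fib_cong) (auto simp: Gk_def Suc U_pow)
  then show ?thesis by blast
qed

lemma idx_meas: "(\<lambda>z. idx' (fst z)) \<in> measurable IZ (count_space UNIV)"
  using measurable_compose[OF measurable_fst idx'_meas] by (simp add: IZ_def comp_def)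

lemma Psi_glue:
  shows "Psi \<in> invertible_mpt IZ"
    and "\<And>w. w \<in> space IZ \<Longrightarrow> Pinv w = the_inv_into (space IZ) (Gk (idx' (fst w))) w"
proof -
  have pres: "\<And>i z. z \<in> space IZ \<Longrightarrow> idx' (fst (Gk i z)) = i \<longleftrightarrow> idx' (fst z) = i"
    using Gk_fst by simp
  note gl = glue_impt[OF Gk_impt idx_meas pres]
  show "Psi \<in> invertible_mpt IZ" using gl(1) unfolding Psi_def .
  show "\<And>w. w \<in> space IZ \<Longrightarrow> Pinv w = the_inv_into (space IZ) (Gk (idx' (fst w))) w"
    using gl(2) unfolding Pinv_def Psi_def by blast
qed

lemma Psi: "Psi \<in> invertible_mpt IZ" using Psi_glue(1) .
lemma Pinv: "Pinv \<in> invertible_mpt IZ" unfolding Pinv_def by (rule impt_inv[OF Psi])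

lemma Psi_fib: "\<exists>h. fib (\<lambda>x. x) Psi h"
proof -
  obtain h where h: "\<And>i. fib (\<lambda>x. x) (Gk i) (h i)" using Gk_fib by metis
  have "fib (\<lambda>x. x) (\<lambda>z. Gk (idx' (fst z)) z) (\<lambda>x. h (idx' x) x)"
    by (rule fib_glue[OF h]) auto
  then show ?thesis unfolding Psi_def[abs_def] by blast
qed

lemma Pinv_fib: "\<exists>h. fib (\<lambda>x. x) Pinv h"
proof -
  obtain h where h: "fib (\<lambda>x. x) Psi h" using Psi_fib by blast
  have b: "bij_betw (\<lambda>x. x) (space IX) (space IX)" by (simp add: bij_betw_def)
  have "fib (the_inv_into (space IX) (\<lambda>x. x)) Pinv
           (\<lambda>x. the_inv_into (space IX) (h (the_inv_into (space IX) (\<lambda>x. x) x)))"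
    unfolding Pinv_def by (rule fib_inv[OF Psi h b])
  then have "fib (\<lambda>x. x) Pinv (\<lambda>x. the_inv_into (space IX) (h (the_inv_into (space IX) (\<lambda>x. x) x)))"
    by (rule fib_cong) (auto simp: the_inv_into_id_on)
  then show ?thesis by blast
qed

lemma Psi_fst: "z \<in> space IZ \<Longrightarrow> fst (Psi z) = fst z"
  unfolding Psi_def by (rule Gk_fst)

lemma Psi_sp: "z \<in> space IZ \<Longrightarrow> Psi z \<in> space IZ" by (rule impt_space[OF Psi])
lemma Pinv_sp: "z \<in> space IZ \<Longrightarrow> Pinv z \<in> space IZ" by (rule impt_space[OF Pinv])
lemma Psi_Pinv: "z \<in> space IZ \<Longrightarrow> Psi (Pinv z) = z" unfolding Pinv_def by (rule impt_inv_f[OF Psi])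
lemma Pinv_Psi: "z \<in> space IZ \<Longrightarrow> Pinv (Psi z) = z" unfolding Pinv_def by (rule impt_f_inv[OF Psi])
lemma Pinv_fst: "z \<in> space IZ \<Longrightarrow> fst (Pinv z) = fst z"
  using Psi_fst[OF Pinv_sp] Psi_Pinv by metis

lemma Psi_eq: "z \<in> space IZ \<Longrightarrow> fst z \<in> I \<Longrightarrow> Psi z = (fst z, snd ((T ^^ kk (fst z)) z))"
  unfolding Psi_def idx'_def by (simp add: Gk_eq)

end




context constr
begin

definition "C z = Pinv (lift T0 (Psi z))"
definition "G2 i = (if i = (1::nat) then C else T)"
definition "i2 x = (if x \<in> I then (1::nat) else 0)"

lemma S_glue: "S = (\<lambda>z. G2 (i2 (fst z)) z)"
  by (auto simp: S_def G2_def i2_def C_def)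

lemma T_fst: "z \<in> space IZ \<Longrightarrow> fst (T z) = T0 (fst z)"
  using fibD(1)[OF fT] by (auto simp: space_IZ space_IX)

lemma L: "lift T0 \<in> invertible_mpt IZ" by (rule lift_impt[OF T0])

lemma C_impt: "C \<in> invertible_mpt IZ"
  unfolding C_def[abs_def] by (rule impt_comp[OF Pinv impt_comp[OF L Psi]])

lemma Lsp: "z \<in> space IZ \<Longrightarrow> lift T0 z \<in> space IZ" by (rule impt_space[OF L])

lemma C_fst:
  assumes z: "z \<in> space IZ" shows "fst (C z) = T0 (fst z)"
proof -
  have w: "lift T0 (Psi z) \<in> space IZ" by (rule Lsp[OF Psi_sp[OF z]])
  have "fst (C z) = fst (lift T0 (Psi z))" unfolding C_def by (rule Pinv_fst[OF w])
  also have "\<dots> = T0 (fst (Psi z))" by (cases "Psi z") simp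
  also have "\<dots> = T0 (fst z)" using Psi_fst[OF z] by simp
  finally show ?thesis .
qed

lemma C_fib: "\<exists>h. fib T0 C h"
proof -
  obtain h1 where h1: "fib (\<lambda>x. x) Psi h1" using Psi_fib by blast
  obtain h2 where h2: "fib (\<lambda>x. x) Pinv h2" using Pinv_fib by blast
  have a: "fib (\<lambda>x. T0 x) (\<lambda>z. lift T0 (Psi z)) (\<lambda>x y. (\<lambda>x y. y) x (h1 x y))"
    by (rule fib_comp[OF fib_lift h1]) auto
  have "fib (\<lambda>x. T0 x) (\<lambda>z. Pinv (lift T0 (Psi z))) (\<lambda>x y. h2 (T0 x) (h1 x y))"
    using fib_comp[OF h2 a T0sp] by simp
  then have "fib T0 C (\<lambda>x y. h2 (T0 x) (h1 x y))" unfolding C_def[abs_def] by (simp add: eta_contract_eq)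
  then show ?thesis by blast
qed

lemma i2_meas: "(\<lambda>z. i2 (fst z)) \<in> measurable IZ (count_space UNIV)"
proof -
  have "i2 \<in> measurable IX (count_space UNIV)"
    unfolding measurable_count_space_eq2_countable
  proof safe
    fix n :: nat
    have "i2 -` {n} \<inter> space IX = (if n = 1 then I else if n = 0 then space IX - I else {})"
      unfolding i2_def using I_sp by auto
    then show "i2 -` {n} \<inter> space IX \<in> sets IX" using I_sets by auto
  qed simp
  then show ?thesis using measurable_compose[OF measurable_fst] by (simp add: IZ_def comp_def)
qed

lemma S_impt: "S \<in> invertible_mpt IZ"
proof -
  have G2: "G2 i \<in> invertible_mpt IZ" for i unfolding G2_def using C_impt T by auto
  have pres: "i2 (fst (G2 i z)) = i \<longleftrightarrow> i2 (fst z) = i" if z: "z \<in> space IZ" for i z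
  proof -
    have "fst (G2 i z) = T0 (fst z)" unfolding G2_def using T_fst[OF z] C_fst[OF z] by auto
    moreover have "fst z \<in> space IX" using z by (auto simp: space_IZ space_IX)
    ultimately show ?thesis unfolding i2_def using I_inv by auto
  qed
  show ?thesis unfolding S_glue by (rule glue_impt(1)[OF G2 i2_meas pres])
qed

lemma S_fib: "\<exists>h. fib T0 S h"
proof -
  obtain hc where hc: "fib T0 C hc" using C_fib by blast
  define h2 where "h2 i = (if i = (1::nat) then hc else g)" for i
  have "fib T0 (G2 i) (h2 i)" for i unfolding G2_def h2_def using hc fT by auto
  then have "fib T0 (\<lambda>z. G2 (i2 (fst z)) z) (\<lambda>x. h2 (i2 x) x)"
    by (rule fib_glue) auto
  then show ?thesis unfolding S_glue by blast
qed

lemma S_ext: "S \<in> extensions T0"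
  unfolding extensions_fib using S_impt S_fib by blast

lemma S_eq_T:
  assumes z: "z \<in> space IZ" and nz: "fst z \<notin> I \<inter> B"
  shows "S z = T z"
proof (cases "fst z \<in> I")
  case False then show ?thesis by (simp add: S_def)
next
  case True
  then have nB: "fst z \<notin> B" using nz by auto
  have Tz: "T z \<in> space IZ" using Tsp[OF z] .
  have fTz: "fst (T z) = T0 (fst z)" using T_fst[OF z] .
  have TI: "T0 (fst z) \<in> I" using I_inv True I_sp by blast
  have k: "kk (fst z) = Suc (kk (T0 (fst z)))" using kk_T0[OF True nB] .
  have "Psi (T z) = (T0 (fst z), snd ((T ^^ kk (T0 (fst z))) (T z)))"
    using Psi_eq[OF Tz] fTz TI by simp
  also have "\<dots> = (T0 (fst z), snd ((T ^^ kk (fst z)) z))"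
    using k by (simp add: funpow_swap1)
  also have "\<dots> = lift T0 (Psi z)"
    using Psi_eq[OF z True] by (simp add: lift_def)
  finally have "Psi (T z) = lift T0 (Psi z)" .
  then have "S z = Pinv (Psi (T z))" using True by (simp add: S_def)
  also have "\<dots> = T z" using Pinv_Psi[OF Tz] .
  finally show ?thesis .
qed

lemma measure_impt_image:
  assumes "R \<in> invertible_mpt IZ" "D \<in> sets IZ"
  shows "measure IZ (R ` D) = measure IZ D"
  using impt_image[OF assms] by (simp add: measure_def)

lemma S_close:
  assumes E: "E \<in> sets IZ"
  shows "measure IZ ((S ` E - T ` E) \<union> (T ` E - S ` E)) \<le> 2 * measure IX B"
proof -
  interpret Z: prob_space IZ by (rule prob_IZ)
  interpret X: prob_space IX by (rule prob_IX)
  define D where "D = (I \<inter> B) \<times> space IX"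
  have Dsets: "D \<in> sets IZ" unfolding D_def IZ_def using I_sets B by (intro pair_measureI) auto
  have Esp: "E \<subseteq> space IZ" using sets.sets_into_space[OF E] .
  have "S ` E - T ` E \<subseteq> S ` D"
  proof
    fix w assume "w \<in> S ` E - T ` E"
    then obtain z where z: "z \<in> E" "w = S z" "w \<notin> T ` E" by auto
    then have "fst z \<in> I \<inter> B" using S_eq_T Esp by blast
    then have "z \<in> D" using z(1) Esp by (auto simp: D_def space_IZ space_IX)
    then show "w \<in> S ` D" using z by auto
  qed
  moreover have "T ` E - S ` E \<subseteq> T ` D"
  proof
    fix w assume "w \<in> T ` E - S ` E"
    then obtain z where z: "z \<in> E" "w = T z" "w \<notin> S ` E" by auto
    then have "fst z \<in> I \<inter> B" using S_eq_T Esp by (metis image_eqI subsetD)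
    then have "z \<in> D" using z(1) Esp by (auto simp: D_def space_IZ space_IX)
    then show "w \<in> T ` D" using z by auto
  qed
  ultimately have sub: "(S ` E - T ` E) \<union> (T ` E - S ` E) \<subseteq> S ` D \<union> T ` D" by blast
  have SD: "S ` D \<in> sets IZ" "T ` D \<in> sets IZ" using impt_image(1)[OF S_impt Dsets] impt_image(1)[OF T Dsets] by auto
  have "measure IZ ((S ` E - T ` E) \<union> (T ` E - S ` E)) \<le> measure IZ (S ` D \<union> T ` D)"
    by (rule Z.finite_measure_mono[OF sub]) (use SD in auto)
  also have "\<dots> \<le> measure IZ (S ` D) + measure IZ (T ` D)" by (rule measure_Un_le[OF SD])
  also have "\<dots> = 2 * measure IZ D"
    using measure_impt_image[OF S_impt Dsets] measure_impt_image[OF T Dsets] by simp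
  also have "measure IZ D = measure IX (I \<inter> B)"
  proof -
    have "emeasure IZ D = emeasure IX (I \<inter> B) * emeasure IX (space IX)"
      unfolding D_def IZ_def
      by (rule sigma_finite_measure.emeasure_pair_measure_Times[OF sigma_finite_IX]) (use I_sets B in auto)
    then show ?thesis by (simp add: measure_def X.emeasure_space_1)
  qed
  also have "measure IX (I \<inter> B) \<le> measure IX B" by (rule X.finite_measure_mono) (use B in auto)
  finally show ?thesis by simp
qed

end




lemma Icc_IX:
  assumes "0 \<le> d" "d \<le> (1::real)"
  shows "{0..d} \<in> sets IX" "emeasure IX {0..d} = ennreal d" "measure IX {0..d} = d"
proof -
  have "{0..d} = {0..1} \<inter> {0..d}" using assms by auto
  then show s: "{0..d} \<in> sets IX" unfolding IX_def sets_restrict_space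
    by (metis atLeastAtMost_borel image_eqI sets_lborel)
  show e: "emeasure IX {0..d} = ennreal d" unfolding IX_def
    using assms by (subst emeasure_restrict_space) auto
  show "measure IX {0..d} = d" using e assms by (simp add: measure_def)
qed

lemma fst_meas: "fst \<in> measurable IZ IX"
  unfolding IZ_def by (rule measurable_fst)

lemma fst_space: "fst \<in> space IZ \<rightarrow> space IX"
  by (auto simp: space_IZ space_IX)

lemma sets_subX: "sets subX = {fst -` C \<inter> space IZ | C. C \<in> sets IX}"
  unfolding subX_def by (rule sets_vimage_algebra2[OF fst_space])

lemma subalg_subX: "subalgebra IZ subX"
  unfolding subalgebra_def
proof
  show "space subX = space IZ" by (simp add: subX_def)
  show "sets subX \<subseteq> sets IZ" unfolding sets_subX using measurable_sets[OF fst_meas] by auto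
qed

lemma sfs_subX: "sigma_finite_subalgebra IZ subX"
proof -
  interpret prob_space IZ by (rule prob_IZ)
  have "finite_measure_subalgebra IZ subX"
    unfolding finite_measure_subalgebra_def finite_measure_subalgebra_axioms_def
    using subalg_subX finite_measure_axioms by auto
  then show ?thesis by (rule finite_measure_subalgebra_is_sigma_finite)
qed

lemma fst_meas_subX: "fst \<in> measurable subX IX"
  unfolding subX_def by (rule measurable_vimage_algebra1[OF fst_space])

lemma integrable_boundedZ:
  fixes f :: "real \<times> real \<Rightarrow> real"
  assumes "f \<in> borel_measurable IZ" "\<And>z. z \<in> space IZ \<Longrightarrow> \<bar>f z\<bar> \<le> c"
  shows "integrable IZ f"
proof -
  interpret prob_space IZ by (rule prob_IZ)
  show ?thesis by (rule integrable_const_bound[where B=c]) (use assms in auto)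
qed

context constr
begin

lemma T0_pow_mp: "meas_pres IX (T0 ^^ n)" using imptD(2)[OF impt_pow[OF T0]] .

lemma I_pos:
  assumes "measure IX B > 0"
  shows "measure IX I > 0"
proof -
  interpret X: prob_space IX by (rule prob_IX)
  define F where "F N = {x \<in> space IX. \<exists>k\<ge>N. (T0 ^^ k) x \<in> B}" for N
  have [measurable]: "\<And>k. (T0 ^^ k) \<in> measurable IX IX" by (rule T0_pow_meas)
  have [measurable]: "B \<in> sets IX" by (rule B)
  have Fs: "F N \<in> sets IX" for N unfolding F_def by measurable
  have FN: "F N = (T0 ^^ N) -` F 0 \<inter> space IX" for N
  proof (rule set_eqI)
    fix x
    show "x \<in> F N \<longleftrightarrow> x \<in> (T0 ^^ N) -` F 0 \<inter> space IX"
    proof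
      assume "x \<in> F N"
      then obtain k where k: "x \<in> space IX" "k \<ge> N" "(T0 ^^ k) x \<in> B" unfolding F_def by auto
      have e: "(T0 ^^ (k - N)) ((T0 ^^ N) x) = (T0 ^^ (k - N + N)) x" by (simp add: funpow_add)
      then have "(T0 ^^ (k - N)) ((T0 ^^ N) x) \<in> B" using k by simp
      then show "x \<in> (T0 ^^ N) -` F 0 \<inter> space IX" using k funpow_space[OF T0sp] unfolding F_def by auto
    next
      assume "x \<in> (T0 ^^ N) -` F 0 \<inter> space IX"
      then obtain j where j: "x \<in> space IX" "(T0 ^^ j) ((T0 ^^ N) x) \<in> B" unfolding F_def by auto
      then have "(T0 ^^ (j + N)) x \<in> B" by (simp add: funpow_add)
      then show "x \<in> F N" using j unfolding F_def by (intro CollectI conjI exI[of _ "j + N"]) auto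
    qed
  qed
  have eqm: "emeasure IX (F N) = emeasure IX (F 0)" for N
    unfolding FN[of N] by (rule meas_pres_emeasure[OF T0_pow_mp Fs])
  have dec: "decseq F" unfolding decseq_def F_def by (auto intro: order_trans)
  have "I = (\<Inter>N. F N)" unfolding I_def F_def by auto
  have rF: "range F \<subseteq> sets IX" using Fs by auto
  have "(INF n. emeasure IX (F n)) = emeasure IX (\<Inter>i. F i)"
    by (rule INF_emeasure_decseq[OF rF dec]) (simp add: X.emeasure_finite)
  then have "emeasure IX I = (INF N. emeasure IX (F N))"
    using \<open>I = (\<Inter>N. F N)\<close> by simp
  also have "\<dots> = (INF N::nat. emeasure IX (F 0))" using eqm by (intro INF_cong) auto
  also have "\<dots> = emeasure IX (F 0)" by simp
  finally have eI: "emeasure IX I = emeasure IX (F 0)" .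
  have "B \<subseteq> F 0" unfolding F_def using sets.sets_into_space[OF B] by (auto intro: exI[of _ 0])
  then have "measure IX B \<le> measure IX (F 0)" by (rule X.finite_measure_mono) (rule Fs)
  moreover have "measure IX I = measure IX (F 0)" using eI by (simp add: measure_def)
  ultimately show ?thesis using assms by simp
qed

definition "H = I \<times> {0..1/2::real}"
definition "A = Psi -` H \<inter> space IZ"

lemma H_sets: "H \<in> sets IZ"
  unfolding H_def IZ_def using I_sets Icc_IX(1)[of "1/2"] by (intro pair_measureI) auto

lemma A_sets: "A \<in> sets IZ"
  unfolding A_def by (rule measurable_sets[OF imptD(4)[OF Psi] H_sets])

lemma S_sp: "z \<in> space IZ \<Longrightarrow> S z \<in> space IZ" by (rule impt_space[OF S_impt])

lemma S_A: assumes z: "z \<in> space IZ" shows "S z \<in> A \<longleftrightarrow> z \<in> A"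
proof (cases "fst z \<in> I")
  case True
  have w: "lift T0 (Psi z) \<in> space IZ" by (rule Lsp[OF Psi_sp[OF z]])
  have "Psi (S z) = lift T0 (Psi z)" using True Psi_Pinv[OF w] by (simp add: S_def)
  moreover have "lift T0 (Psi z) \<in> H \<longleftrightarrow> Psi z \<in> H"
  proof -
    obtain a b where ab: "Psi z = (a, b)" by (cases "Psi z")
    have "a \<in> space IX" using Psi_sp[OF z] ab by (auto simp: space_IZ space_IX)
    then show ?thesis using ab I_inv by (simp add: H_def)
  qed
  ultimately show ?thesis unfolding A_def using S_sp[OF z] z by auto
next
  case False
  have "fst (Psi (S z)) \<notin> I" using False Psi_fst[OF S_sp[OF z]] T_fst[OF z] I_inv[of "fst z"] z
    by (auto simp: S_def space_IZ space_IX)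
  moreover have "fst (Psi z) \<notin> I" using False Psi_fst[OF z] by simp
  ultimately show ?thesis unfolding A_def H_def by auto
qed

lemma S_pow_A: assumes z: "z \<in> space IZ" shows "(S ^^ n) z \<in> A \<longleftrightarrow> z \<in> A"
proof (induction n)
  case (Suc n)
  have "(S ^^ n) z \<in> space IZ" by (rule funpow_space[OF S_sp z])
  then show ?case using S_A Suc by simp
qed simp

definition "Ibar = I \<times> space IX"

lemma Ibar_sets: "Ibar \<in> sets IZ"
  unfolding Ibar_def IZ_def using I_sets by (intro pair_measureI) auto

lemma measure_Times:
  assumes "Cc \<in> sets IX" "D \<in> sets IX"
  shows "measure IZ (Cc \<times> D) = measure IX Cc * measure IX D"
proof -
  have "emeasure IZ (Cc \<times> D) = emeasure IX Cc * emeasure IX D"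
    unfolding IZ_def by (rule sigma_finite_measure.emeasure_pair_measure_Times[OF sigma_finite_IX assms])
  then show ?thesis by (simp add: measure_def enn2real_mult)
qed

lemma cond_A: "AE z in IZ. real_cond_exp IZ subX (indicator A) z = indicator I (fst z) / 2"
proof (rule sigma_finite_subalgebra.real_cond_exp_charact[OF sfs_subX])
  interpret Z: prob_space IZ by (rule prob_IZ)
  interpret X: prob_space IX by (rule prob_IX)
  have mI: "(\<lambda>z. indicator I (fst z) / 2 :: real) \<in> borel_measurable subX"
    using measurable_compose[OF fst_meas_subX, of "\<lambda>x. indicator I x / 2 :: real"] I_sets
    by (simp add: comp_def)
  then show "(\<lambda>z. indicator I (fst z) / 2 :: real) \<in> borel_measurable subX" .
  have mI': "(\<lambda>z. indicator I (fst z) / 2 :: real) \<in> borel_measurable IZ"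
    using measurable_compose[OF fst_meas, of "\<lambda>x. indicator I x / 2 :: real"] I_sets
    by (simp add: comp_def)
  show "integrable IZ (\<lambda>z. indicator I (fst z) / 2 :: real)"
    by (rule integrable_boundedZ[OF mI', of 1]) (auto simp: indicator_def)
  show iA: "integrable IZ (indicator A :: _ \<Rightarrow> real)"
    using A_sets by (intro integrable_real_indicator) (auto simp: Z.emeasure_finite less_top[symmetric])
  fix Cs assume "Cs \<in> sets subX"
  then obtain Cc where Cc: "Cc \<in> sets IX" "Cs = fst -` Cc \<inter> space IZ" unfolding sets_subX by auto
  have CI: "Cc \<inter> I \<in> sets IX" using Cc I_sets by auto
  have Csp: "Cc \<subseteq> space IX" using sets.sets_into_space[OF Cc(1)] .
  have "(\<integral>z\<in>Cs. indicator A z \<partial>IZ) = (\<integral>z. indicator (Cs \<inter> A) z \<partial>IZ)"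
    unfolding set_lebesgue_integral_def by (rule Bochner_Integration.integral_cong) (auto simp: indicator_def)
  also have "\<dots> = measure IZ (Cs \<inter> A)" using Cc A_sets sets.sets_into_space[OF A_sets] by (simp add: Int_assoc Int_absorb2)
  also have "Cs \<inter> A = Psi -` ((Cc \<inter> I) \<times> {0..1/2}) \<inter> space IZ"
    unfolding Cc A_def H_def using Psi_fst by force
  also have "measure IZ \<dots> = measure IZ ((Cc \<inter> I) \<times> {0..1/2})"
  proof -
    have "(Cc \<inter> I) \<times> {0..1/2} \<in> sets IZ" unfolding IZ_def using CI Icc_IX(1)[of "1/2"] by (intro pair_measureI) auto
    then show ?thesis using meas_pres_emeasure[OF imptD(2)[OF Psi]] by (simp add: measure_def)
  qed
  also have "\<dots> = measure IX (Cc \<inter> I) / 2" using measure_Times[OF CI Icc_IX(1)[of "1/2"]] Icc_IX(3)[of "1/2"] by simp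
  finally have L: "(\<integral>z\<in>Cs. indicator A z \<partial>IZ) = measure IX (Cc \<inter> I) / 2" .
  have "(\<integral>z\<in>Cs. (indicator I (fst z) :: real) / 2 \<partial>IZ) = (\<integral>z. (indicator ((Cc \<inter> I) \<times> space IX) z :: real) / 2 \<partial>IZ)"
    unfolding set_lebesgue_integral_def Cc
    by (rule Bochner_Integration.integral_cong) (auto simp: indicator_def space_IZ space_IX)
  also have "\<dots> = measure IZ ((Cc \<inter> I) \<times> space IX) / 2"
  proof -
    have s: "(Cc \<inter> I) \<times> space IX \<in> sets IZ" unfolding IZ_def using CI by (intro pair_measureI) auto
    show ?thesis using s by (simp add: Int_absorb2 sets.sets_into_space)
  qed
  also have "\<dots> = measure IX (Cc \<inter> I) / 2" using measure_Times[OF CI sets.top] X.prob_space by simp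
  finally show "(\<integral>z\<in>Cs. indicator A z \<partial>IZ) = (\<integral>z\<in>Cs. (indicator I (fst z) :: real) / 2 \<partial>IZ)" using L by simp
qed

end




context constr
begin

definition "fA z = complex_of_real (indicator A z)"

lemma I_pow: "x \<in> space IX \<Longrightarrow> (T0 ^^ n) x \<in> I \<longleftrightarrow> x \<in> I"
proof (induction n)
  case (Suc n)
  have "(T0 ^^ n) x \<in> space IX" by (rule funpow_space[OF T0sp Suc.prems])
  then show ?case using I_inv Suc by simp
qed simp

lemma cond_zero: "AE z in IZ. real_cond_exp IZ subX (\<lambda>w. 0) z = 0"
  by (rule sigma_finite_subalgebra.real_cond_exp_F_meas[OF sfs_subX]) auto

lemma cexpX_fA: "AE z in IZ. cexpX fA z = complex_of_real (indicator I (fst z) / 2)"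
proof -
  have re: "(\<lambda>w. Re (fA w)) = indicator A" by (auto simp: fA_def)
  have im: "(\<lambda>w. Im (fA w)) = (\<lambda>w. 0)" by (auto simp: fA_def)
  show ?thesis using cond_A cond_zero unfolding cexpX_def re im
    by eventually_elim (simp only: , simp)
qed

lemma S_pow_meas: "(S ^^ n) \<in> measurable IZ IZ" using imptD(4)[OF impt_pow[OF S_impt]] .
lemma L_pow_meas: "(lift T0 ^^ n) \<in> measurable IZ IZ" using imptD(4)[OF impt_pow[OF L]] .

lemma cexpX_first: "AE z in IZ. cexpX (\<lambda>w. fA ((S ^^ n) w) * cnj (fA w)) z = complex_of_real (indicator I (fst z) / 2)"
proof -
  have re: "(\<lambda>w. Re (fA ((S ^^ n) w) * cnj (fA w))) = (\<lambda>w. indicator A ((S ^^ n) w) * indicator A w)"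
    by (auto simp: fA_def)
  have im: "(\<lambda>w. Im (fA ((S ^^ n) w) * cnj (fA w))) = (\<lambda>w. 0)" by (auto simp: fA_def)
  have m1: "(\<lambda>w. indicator A ((S ^^ n) w) * indicator A w :: real) \<in> borel_measurable IZ"
  proof -
    have [measurable]: "(S ^^ n) \<in> measurable IZ IZ" by (rule S_pow_meas)
    have [measurable]: "A \<in> sets IZ" by (rule A_sets)
    show ?thesis by measurable
  qed
  have m2: "(indicator A :: _ \<Rightarrow> real) \<in> borel_measurable IZ" using A_sets by simp
  have "AE w in IZ. indicator A ((S ^^ n) w) * indicator A w = (indicator A w :: real)"
    using AE_space by eventually_elim (auto simp: S_pow_A indicator_def)
  then have c: "AE z in IZ. real_cond_exp IZ subX (\<lambda>w. indicator A ((S ^^ n) w) * indicator A w) z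
      = real_cond_exp IZ subX (indicator A) z"
    by (rule sigma_finite_subalgebra.real_cond_exp_cong[OF sfs_subX _ m1 m2])
  show ?thesis using c cond_A cond_zero unfolding cexpX_def re im
    by eventually_elim (simp only: , simp)
qed

lemma cexpX_second: "AE z in IZ. cexpX fA ((lift T0 ^^ n) z) = complex_of_real (indicator I (fst z) / 2)"
proof -
  have d: "distr IZ IZ (lift T0 ^^ n) = IZ" using imptD(2)[OF impt_pow[OF L]] by (simp add: meas_pres_def)
  have "AE z in distr IZ IZ (lift T0 ^^ n). cexpX fA z = complex_of_real (indicator I (fst z) / 2)"
    unfolding d by (rule cexpX_fA)
  then have a: "AE z in IZ. cexpX fA ((lift T0 ^^ n) z) = complex_of_real (indicator I (fst ((lift T0 ^^ n) z)) / 2)"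
    by (rule AE_distrD[OF L_pow_meas])
  have "AE z in IZ. fst ((lift T0 ^^ n) z) \<in> I \<longleftrightarrow> fst z \<in> I"
    using AE_space
  proof eventually_elim
    case (elim z)
    then obtain a b where ab: "z = (a, b)" "a \<in> space IX" by (auto simp: space_IZ space_IX)
    then show ?case using I_pow by (simp add: lift_pow)
  qed
  then show ?thesis using a by eventually_elim (simp add: indicator_def)
qed

lemma cnj_fA: "(\<lambda>w. cnj (fA w)) = fA" by (auto simp: fA_def)

definition "Dn n z = cexpX (\<lambda>w. fA ((S ^^ n) w) * cnj (fA w)) z
                        - cexpX fA (((lift T0) ^^ n) z) * cexpX (\<lambda>w. cnj (fA w)) z"

lemma Dn_AE: "AE z in IZ. Dn n z = complex_of_real (indicator I (fst z) / 4)"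
  using cexpX_first[of n] cexpX_second[of n] cexpX_fA unfolding Dn_def cnj_fA
  by eventually_elim (simp only: , cases "fst z \<in> I", simp_all add: indicator_def)

lemma Dn_meas: "Dn n \<in> borel_measurable IZ"
proof -
  have [measurable]: "(S ^^ n) \<in> measurable IZ IZ" by (rule S_pow_meas)
  have [measurable]: "(lift T0 ^^ n) \<in> measurable IZ IZ" by (rule L_pow_meas)
  show ?thesis unfolding Dn_def[abs_def] cexpX_def by measurable
qed

lemma L2_Dn: "L2norm (Dn n) = sqrt (measure IX I) / 4"
proof -
  interpret Z: prob_space IZ by (rule prob_IZ)
  interpret X: prob_space IX by (rule prob_IX)
  have m1: "(\<lambda>z. (cmod (Dn n z))\<^sup>2) \<in> borel_measurable IZ" using Dn_meas by measurable
  have mI: "(\<lambda>z. indicator I (fst z) / 16 :: real) \<in> borel_measurable IZ"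
    using measurable_compose[OF fst_meas, of "\<lambda>x. indicator I x / 16 :: real"] I_sets
    by (simp add: comp_def)
  have "AE z in IZ. (cmod (Dn n z))\<^sup>2 = indicator I (fst z) / 16"
    using Dn_AE[of n] by eventually_elim (simp only: , cases "fst z \<in> I", simp_all add: indicator_def power2_eq_square)
  then have "(\<integral>z. (cmod (Dn n z))\<^sup>2 \<partial>IZ) = (\<integral>z. indicator I (fst z) / 16 \<partial>IZ)"
    by (rule integral_cong_AE[OF m1 mI])
  also have "\<dots> = (\<integral>z. (indicator (I \<times> space IX) z :: real) / 16 \<partial>IZ)"
    by (rule Bochner_Integration.integral_cong) (auto simp: indicator_def space_IZ space_IX)
  also have "\<dots> = measure IZ (I \<times> space IX) / 16"
    using Ibar_sets[unfolded Ibar_def] by (simp add: Int_absorb2 sets.sets_into_space)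
  also have "\<dots> = measure IX I / 16" using measure_Times[OF I_sets sets.top] X.prob_space by simp
  finally have "(\<integral>z. (cmod (Dn n z))\<^sup>2 \<partial>IZ) = measure IX I / 16" .
  moreover have s16: "sqrt 16 = (4::real)" by (rule real_sqrt_unique) auto
  ultimately show ?thesis unfolding L2norm_def by (simp only: real_sqrt_divide s16)
qed

lemma L2_rel_fA: "L2_rel fA"
  unfolding L2_rel_def
proof (intro conjI)
  interpret Z: prob_space IZ by (rule prob_IZ)
  have [measurable]: "A \<in> sets IZ" by (rule A_sets)
  show "fA \<in> borel_measurable IZ" unfolding fA_def[abs_def] by measurable
  have sq: "(\<lambda>z. (cmod (fA z))\<^sup>2) = indicator A" by (auto simp: fA_def indicator_def)
  show "integrable IZ (\<lambda>z. (cmod (fA z))\<^sup>2)" unfolding sq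
    by (intro integrable_real_indicator) (auto simp: Z.emeasure_finite less_top[symmetric])
  have "AE z in IZ. sqrt (real_cond_exp IZ subX (\<lambda>w. (cmod (fA w))\<^sup>2) z) \<le> 1"
    using cond_A unfolding sq by eventually_elim (simp only: , cases "fst z \<in> I", simp_all add: indicator_def)
  then show "\<exists>C. AE z in IZ. sqrt (real_cond_exp IZ subX (\<lambda>w. (cmod (fA w))\<^sup>2) z) \<le> C" by blast
qed

lemma not_mixing:
  assumes "measure IX B > 0"
  shows "\<not> strongly_mixing_ext T0 S"
proof
  assume "strongly_mixing_ext T0 S"
  then have "(\<lambda>n. L2norm (Dn n)) \<longlonglongrightarrow> 0"
    using L2_rel_fA unfolding strongly_mixing_ext_def Dn_def[abs_def] by blast
  then have "(\<lambda>n. sqrt (measure IX I) / 4) \<longlonglongrightarrow> 0" by (simp add: L2_Dn)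
  then have "sqrt (measure IX I) / 4 = 0" by (simp add: LIMSEQ_const_iff)
  then show False using I_pos[OF assms] by simp
qed

end




lemma openin_weak: "openin (weak_topology W) = weak_open W"
  unfolding weak_topology_def by (rule topology_inverse'[OF istopology_weak_open])

lemma topspace_weak: "invertible_mpt W \<subseteq> topspace (weak_topology W)"
proof -
  have "weak_open W (invertible_mpt W)"
    unfolding weak_open_def
  proof safe
    fix T assume "T \<in> invertible_mpt W"
    show "\<exists>F e. finite F \<and> F \<subseteq> sets W \<and> e > 0 \<and> weak_nbhd W T F e \<subseteq> invertible_mpt W"
      by (rule exI[of _ "{}"], rule exI[of _ 1]) (auto simp: weak_nbhd_def)
  qed
  then show ?thesis unfolding topspace_def openin_weak by blast
qed

theorem proposition3p5:
  assumes "T0 \<in> invertible_mpt IX"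
    and "antiperiodic IX T0"
  shows "extensions T0 \<subseteq>
           (subtopology (weak_topology IZ) (extensions T0)) closure_of
             (extensions T0 - strongly_mixing_exts T0)"
proof
  fix T assume Text: "T \<in> extensions T0"
  then have Ti: "T \<in> invertible_mpt IZ" and "\<exists>g. fib T0 T g" unfolding extensions_fib by auto
  then obtain g where fT: "fib T0 T g" by blast
  show "T \<in> (subtopology (weak_topology IZ) (extensions T0)) closure_of (extensions T0 - strongly_mixing_exts T0)"
    unfolding in_closure_of
  proof (intro conjI allI impI)
    show "T \<in> topspace (subtopology (weak_topology IZ) (extensions T0))"
      using Text Ti topspace_weak by auto
    fix Op assume Op: "T \<in> Op \<and> openin (subtopology (weak_topology IZ) (extensions T0)) Op"
    then obtain V where V: "weak_open IZ V" "Op = V \<inter> extensions T0"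
      unfolding openin_subtopology openin_weak by blast
    then have "T \<in> V" using Op by auto
    then obtain F e where Fe: "finite F" "F \<subseteq> sets IZ" "e > 0" "weak_nbhd IZ T F e \<subseteq> V"
      using V(1) unfolding weak_open_def by meson
    define d where "d = min (e / 4) (1 / 2)"
    have d: "0 < d" "d \<le> 1" "2 * d < e" using Fe(3) by (auto simp: d_def)
    define B where "B = {0..d}"
    have B: "B \<in> sets IX" "measure IX B = d" unfolding B_def using Icc_IX[of d] d by auto
    interpret c: constr T0 T g B
      by unfold_locales (use assms(1) Ti fT B in auto)
    have Sext: "c.S \<in> extensions T0" by (rule c.S_ext)
    have Snm: "c.S \<notin> strongly_mixing_exts T0"
      using c.not_mixing B d unfolding strongly_mixing_exts_def by auto
    have "c.S \<in> weak_nbhd IZ T F e"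
      unfolding weak_nbhd_def
    proof (intro CollectI conjI ballI)
      show "c.S \<in> invertible_mpt IZ" by (rule c.S_impt)
      fix E assume "E \<in> F"
      then have "E \<in> sets IZ" using Fe(2) by auto
      then have "measure IZ ((c.S ` E - T ` E) \<union> (T ` E - c.S ` E)) \<le> 2 * measure IX B"
        by (rule c.S_close)
      then show "measure IZ ((c.S ` E - T ` E) \<union> (T ` E - c.S ` E)) < e" using B d by simp
    qed
    then have "c.S \<in> Op" using Fe(4) V(2) Sext by auto
    then show "\<exists>y. y \<in> extensions T0 - strongly_mixing_exts T0 \<and> y \<in> Op" using Sext Snm by blast
  qed
qed


end
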